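(* There is an absolute constant $\kappa>0$ such that for all positive integers $c$ and $n$, every collection $\mathcal{D}$ of $n$ distinct unit disks in the plane in which at most $c$ disks have a point in common admits a stacking order $f$ with $$\mathrm{vis}(\mathcal{D},f)\ge \kappa\, \frac{v(c)\, n}{c}.$$ Moreover, this bound is asymptotically tight in the worst case: there is an absolute constant $K>0$ such that for all positive integers $c$ and $m$ there is a collection $\mathcal{D}$ of $n=mc$ distinct unit disks, at most $c$ of which have a point in common, such that $\mathrm{vis}(\mathcal{D},f)\le K\, v(c)\, n/c$ for every stacking order $f$ of $\mathcal{D}$.
   Context: A unit disk is a closed disk of radius $1$ in the plane. A stacking order of a finite collection $\mathcal{D}$ of $n$ distinct unit disks is a bijection $f:\mathcal{D}\to\{1,\dots,n\}$; $f(D)$ is regarded as the height of $D$, and the arrangement is viewed from below. A point $x$ on the boundary circle of $D\in\mathcal{D}$ is visible if $x$ does not lie in any disk $D'\in\mathcal{D}$ with $f(D')<f(D)$. The visible perimeter $\mathrm{vis}(\mathcal{D},f)$ is the total length of all visible boundary points, summed over all disks of $\mathcal{D}$. For a positive integer $k$, $v(k)=\inf_{|\mathcal{D}|=k}\max_f \mathrm{vis}(\mathcal{D},f)$, the infimum over all collections $\mathcal{D}$ of $k$ distinct unit disks in the plane and the maximum over all stacking orders $f$ of $\mathcal{D}$. *)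

theory Defs
  imports "HOL-Analysis.Analysis"
begin

text \<open>A unit disk is identified with its center z; the disk is cball z 1 in the complex plane.
A collection of distinct unit disks is a finite set of centers.\<close>

definition stacking_order :: "complex set \<Rightarrow> (complex \<Rightarrow> nat) \<Rightarrow> bool" where
  "stacking_order C f \<longleftrightarrow> bij_betw f C {1..card C}"

text \<open>Visible part of the boundary circle of the disk centered at z, in angle parametrisation
(the circle has radius 1, so arc length equals angle measure): the point z + cis t is visible
iff it lies in no disk of strictly smaller height.\<close>

definition visible_angles :: "complex set \<Rightarrow> (complex \<Rightarrow> nat) \<Rightarrow> complex \<Rightarrow> real set" where
  "visible_angles C f z =
     {t \<in> {0..<2*pi}. \<forall>w\<in>C. f w < f z \<longrightarrow> z + cis t \<notin> cball w 1}"

definition vis :: "complex set \<Rightarrow> (complex \<Rightarrow> nat) \<Rightarrow> real" where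
  "vis C f = (\<Sum>z\<in>C. measure lborel (visible_angles C f z))"

definition max_vis :: "complex set \<Rightarrow> real" where
  "max_vis C = Max {vis C f | f. stacking_order C f}"

definition v :: "nat \<Rightarrow> real" where
  "v k = Inf {max_vis C | C. finite C \<and> card C = k}"

definition depth_le :: "complex set \<Rightarrow> nat \<Rightarrow> bool" where
  "depth_le C c \<longleftrightarrow> (\<forall>p. card {z\<in>C. p \<in> cball z 1} \<le> c)"

end

theory Submission
  imports Defs
begin


definition sep :: "complex set \<Rightarrow> complex set \<Rightarrow> bool" where
  "sep A B \<longleftrightarrow> (\<forall>a\<in>A. \<forall>b\<in>B. 2 < dist a b)"

lemma sep_nocover: "2 < dist z w \<Longrightarrow> z + cis t \<notin> cball w 1"
proof
  assume d: "2 < dist z w" and m: "z + cis t \<in> cball w 1"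
  have "dist z w \<le> dist z (z + cis t) + dist (z + cis t) w" by (rule dist_triangle)
  also have "dist z (z + cis t) = 1" by (simp add: dist_norm)
  finally show False using m d by (simp add: dist_commute)
qed

lemma va_union:
  assumes "\<forall>w\<in>B. h w < h z \<longrightarrow> (\<forall>t. z + cis t \<notin> cball w 1)"
  shows "visible_angles (A \<union> B) h z = visible_angles A h z"
  using assms unfolding visible_angles_def by blast

lemma va_cong:
  assumes "z \<in> C" "\<forall>w\<in>C. h w < h z \<longleftrightarrow> g w < g z"
  shows "visible_angles C h z = visible_angles C g z"
  using assms unfolding visible_angles_def by blast

lemma vis_cong:
  assumes "\<forall>w\<in>C. \<forall>z\<in>C. h w < h z \<longleftrightarrow> g w < g z"
  shows "vis C h = vis C g"
  unfolding vis_def using assms by (intro sum.cong refl, subst va_cong) auto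

lemma sep_disj: "sep A B \<Longrightarrow> A \<inter> B = {}"
  unfolding sep_def by force

lemma vis_union_sep:
  assumes "finite A" "finite B" "sep A B"
  shows "vis (A \<union> B) h = vis A h + vis B h"
proof -
  have d: "A \<inter> B = {}" using sep_disj assms by blast
  have 1: "visible_angles (A \<union> B) h z = visible_angles A h z" if "z \<in> A" for z
    using assms(3) that by (intro va_union) (meson sep_def sep_nocover)
  have 2: "visible_angles (A \<union> B) h z = visible_angles B h z" if "z \<in> B" for z
    using assms(3) that Un_commute[of A B] va_union[of A h z B]
    by (metis (no_types, lifting) dist_commute sep_def sep_nocover)
  show ?thesis unfolding vis_def
    using assms d by (simp add: sum.union_disjoint 1 2 cong: sum.cong)
qed

lemma stacking_ex: "finite C \<Longrightarrow> \<exists>f. stacking_order C f"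
  unfolding stacking_order_def by (rule finite_same_card_bij) auto

lemma vis_fin: assumes "finite C" shows "finite {vis C f | f. stacking_order C f}"
proof -
  have "{vis C f | f. stacking_order C f} \<subseteq> (\<lambda>g. vis C g) ` (PiE C (\<lambda>_. {1..card C}))"
  proof
    fix x assume "x \<in> {vis C f | f. stacking_order C f}"
    then obtain f where f: "stacking_order C f" "x = vis C f" by auto
    have "restrict f C \<in> PiE C (\<lambda>_. {1..card C})"
      using f(1) unfolding stacking_order_def bij_betw_def by auto
    moreover have "vis C f = vis C (restrict f C)" by (rule vis_cong) auto
    ultimately show "x \<in> (\<lambda>g. vis C g) ` (PiE C (\<lambda>_. {1..card C}))" using f by auto
  qed
  moreover have "finite (PiE C (\<lambda>_. {1..card C}))" using assms by (intro finite_PiE) auto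
  ultimately show ?thesis by (meson finite_imageI finite_subset)
qed

lemma vis_le_max: "finite C \<Longrightarrow> stacking_order C f \<Longrightarrow> vis C f \<le> max_vis C"
  unfolding max_vis_def by (rule Max_ge) (auto simp: vis_fin)

lemma max_attained: "finite C \<Longrightarrow> \<exists>f. stacking_order C f \<and> vis C f = max_vis C"
proof -
  assume fc: "finite C"
  then obtain f0 where "stacking_order C f0" using stacking_ex by blast
  then have "max_vis C \<in> {vis C f | f. stacking_order C f}"
    unfolding max_vis_def using fc by (intro Max_in) (auto simp: vis_fin)
  then show ?thesis by auto
qed

lemma vis_nonneg: "0 \<le> vis C f"
  unfolding vis_def by (simp add: sum_nonneg)

lemma rank:
  assumes fin: "finite C" and inj: "inj_on h C"
  shows "\<exists>f. stacking_order C f \<and> vis C f = vis C h"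
proof -
  define f where "f z = card {w\<in>C. h w < h z} + 1" for z
  have mono: "f w < f z" if "w \<in> C" "z \<in> C" "h w < h z" for w z
  proof -
    have "{u\<in>C. h u < h w} \<subset> {u\<in>C. h u < h z}" using that by auto
    then show ?thesis unfolding f_def using fin by (simp add: psubset_card_mono)
  qed
  have ord: "f w < f z \<longleftrightarrow> h w < h z" if "w \<in> C" "z \<in> C" for w z
  proof
    assume "f w < f z"
    show "h w < h z"
    proof (rule ccontr)
      assume "\<not> h w < h z"
      then have "h z < h w \<or> h z = h w" by auto
      then show False
      proof
        assume "h z < h w" then show False using mono[of z w] that \<open>f w < f z\<close> by auto
      next
        assume "h z = h w" then have "z = w" using inj that inj_on_def by metis
        then show False using \<open>f w < f z\<close> by simp
      qed
    qed
  qed (use mono that in auto)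
  have injf: "inj_on f C"
  proof (rule inj_onI)
    fix w z assume "w \<in> C" "z \<in> C" "f w = f z"
    then have "h w = h z" using ord[of w z] ord[of z w] by (metis linorder_neqE less_irrefl)
    then show "w = z" using inj \<open>w \<in> C\<close> \<open>z \<in> C\<close> inj_on_def by metis
  qed
  have img: "f ` C \<subseteq> {1..card C}"
  proof
    fix x assume "x \<in> f ` C"
    then obtain z where z: "z \<in> C" "x = f z" by auto
    have "{w\<in>C. h w < h z} \<subseteq> C - {z}" by auto
    then have "card {w\<in>C. h w < h z} \<le> card (C - {z})" using fin by (intro card_mono) auto
    also have "\<dots> = card C - 1" using z fin by simp
    finally show "x \<in> {1..card C}" using z fin f_def card_gt_0_iff[of C] by auto
  qed
  have "f ` C = {1..card C}"
    using img card_image[OF injf] fin by (intro card_subset_eq) auto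
  then have "stacking_order C f" unfolding stacking_order_def bij_betw_def using injf by auto
  moreover have "vis C f = vis C h" by (rule vis_cong) (auto simp: ord)
  ultimately show ?thesis by blast
qed

lemma vis_le_max_inj: "finite C \<Longrightarrow> inj_on h C \<Longrightarrow> vis C h \<le> max_vis C"
  using rank vis_le_max by metis

lemma max_nonneg: "finite C \<Longrightarrow> 0 \<le> max_vis C"
  using max_attained vis_nonneg by metis

lemma max_ge_2pi:
  assumes "finite C" "C \<noteq> {}" shows "2 * pi \<le> max_vis C"
proof -
  obtain f where f: "stacking_order C f" "vis C f = max_vis C" using max_attained assms by blast
  have "1 \<in> f ` C" using f(1) assms unfolding stacking_order_def bij_betw_def
    by (simp add: card_gt_0_iff Suc_leI)
  then obtain z where z: "z \<in> C" "f z = 1" by auto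
  have "visible_angles C f z = {0..<2*pi}"
    unfolding visible_angles_def using z f(1) unfolding stacking_order_def bij_betw_def by force
  then have e: "measure lborel (visible_angles C f z) = 2 * pi" by simp
  have "measure lborel (visible_angles C f z) \<le> vis C f" unfolding vis_def
    using z assms(1) by (intro member_le_sum) auto
  then show ?thesis using f e by simp
qed



lemma ex_card: "\<exists>C::complex set. finite C \<and> card C = k"
  by (rule exI[of _ "of_nat ` {..<k}"]) (auto simp: card_image inj_on_def)

lemma v_bdd: "bdd_below {max_vis C | C. finite C \<and> card C = k}"
  by (rule bdd_belowI[of _ 0]) (auto simp: max_nonneg)

lemma v_le: "finite C \<Longrightarrow> card C = k \<Longrightarrow> v k \<le> max_vis C"
  unfolding v_def by (rule cInf_lower[OF _ v_bdd]) auto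

lemma v_ge: assumes "1 \<le> k" shows "2 * pi \<le> v k"
  unfolding v_def
proof (rule cInf_greatest)
  show "{max_vis C |C. finite C \<and> card C = k} \<noteq> {}" using ex_card by blast
next
  fix x assume "x \<in> {max_vis C |C. finite C \<and> card C = k}"
  then obtain C where "finite C" "card C = k" "x = max_vis C" by auto
  moreover have "C \<noteq> {}" using assms \<open>card C = k\<close> by auto
  ultimately show "2 * pi \<le> x" using max_ge_2pi[of C] by auto
qed

lemma v_approx: assumes "0 < e" shows "\<exists>C. finite C \<and> card C = k \<and> max_vis C < v k + e"
proof -
  have "Inf {max_vis C | C. finite C \<and> card C = k} < v k + e" using assms v_def by simp
  then obtain x where "x \<in> {max_vis C | C. finite C \<and> card C = k}" "x < v k + e"
    using cInf_less_iff[OF _ v_bdd] ex_card by (metis (mono_tags, lifting) empty_Collect_eq)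
  then show ?thesis by auto
qed

lemma max_sub:
  assumes fin: "finite C" and sub: "S \<subseteq> C"
  shows "max_vis S \<le> max_vis C"
proof -
  have fS: "finite S" using fin sub finite_subset by blast
  obtain f where f: "stacking_order S f" "vis S f = max_vis S" using max_attained fS by blast
  obtain e where e: "stacking_order (C - S) e" using stacking_ex fin by blast
  define h where "h z = (if z \<in> S then f z else card S + e z)" for z
  have er: "e z \<in> {1..card (C-S)}" if "z \<in> C - S" for z using e(1) that unfolding stacking_order_def bij_betw_def by auto
  have fr: "f z \<in> {1..card S}" if "z \<in> S" for z using f(1) that unfolding stacking_order_def bij_betw_def by auto
  have injh: "inj_on h C"
  proof (rule inj_onI)
    fix x y assume xy: "x \<in> C" "y \<in> C" "h x = h y"
    show "x = y"
    proof (cases "x \<in> S"; cases "y \<in> S")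
      assume "x \<in> S" "y \<in> S" then show ?thesis using xy f(1) unfolding h_def stacking_order_def bij_betw_def inj_on_def by auto
    next
      assume "x \<notin> S" "y \<notin> S" then show ?thesis using xy e unfolding h_def stacking_order_def bij_betw_def inj_on_def by auto
    next
      assume "x \<in> S" "y \<notin> S" then show ?thesis using xy fr[of x] er[of y] unfolding h_def stacking_order_def bij_betw_def by auto
    next
      assume "x \<notin> S" "y \<in> S" then show ?thesis using xy fr[of y] er[of x] unfolding h_def stacking_order_def bij_betw_def by auto
    qed
  qed
  have va: "visible_angles C h z = visible_angles S f z" if "z \<in> S" for z
  proof -
    have "C = S \<union> (C - S)" using sub by auto
    then have "visible_angles C h z = visible_angles S h z"
      using va_union[of "C - S" h z S] that fr[of z] unfolding h_def by auto
    also have "\<dots> = visible_angles S f z" by (rule va_cong) (use that h_def in auto)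
    finally show ?thesis .
  qed
  have "max_vis S = (\<Sum>z\<in>S. measure lborel (visible_angles C h z))"
    using f(2) unfolding vis_def by (simp add: va)
  also have "\<dots> \<le> vis C h" unfolding vis_def using fin sub by (intro sum_mono2) auto
  also have "\<dots> \<le> max_vis C" using vis_le_max_inj fin injh by blast
  finally show ?thesis .
qed

lemma max_sup:
  assumes fA: "finite A" and fB: "finite B" and s: "sep A B"
  shows "max_vis A + max_vis B \<le> max_vis (A \<union> B)"
proof -
  obtain fa where fa: "stacking_order A fa" "vis A fa = max_vis A" using max_attained fA by blast
  obtain fb where fb: "stacking_order B fb" "vis B fb = max_vis B" using max_attained fB by blast
  define h where "h z = (if z \<in> A then fa z else card A + fb z)" for z
  have er: "fb z \<in> {1..card B}" if "z \<in> B" for z using fb(1) that unfolding stacking_order_def bij_betw_def by auto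
  have fr: "fa z \<in> {1..card A}" if "z \<in> A" for z using fa(1) that unfolding stacking_order_def bij_betw_def by auto
  have d: "A \<inter> B = {}" using sep_disj s by blast
  have injh: "inj_on h (A \<union> B)"
  proof (rule inj_onI)
    fix x y assume xy: "x \<in> A \<union> B" "y \<in> A \<union> B" "h x = h y"
    show "x = y"
    proof (cases "x \<in> A"; cases "y \<in> A")
      assume "x \<in> A" "y \<in> A" then show ?thesis using xy fa(1) unfolding h_def stacking_order_def bij_betw_def inj_on_def by auto
    next
      assume "x \<notin> A" "y \<notin> A" then show ?thesis using xy fb(1) unfolding h_def stacking_order_def bij_betw_def inj_on_def by auto
    next
      assume "x \<in> A" "y \<notin> A" then show ?thesis using xy fr[of x] er[of y] unfolding h_def stacking_order_def bij_betw_def by auto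
    next
      assume "x \<notin> A" "y \<in> A" then show ?thesis using xy fr[of y] er[of x] unfolding h_def stacking_order_def bij_betw_def by auto
    qed
  qed
  have "vis A h = vis A fa" by (rule vis_cong) (auto simp: h_def)
  moreover have "vis B h = vis B fb" by (rule vis_cong) (use d in \<open>auto simp: h_def\<close>)
  ultimately have "vis (A \<union> B) h = max_vis A + max_vis B"
    using vis_union_sep[OF fA fB s, of h] fa fb by simp
  then show ?thesis using vis_le_max_inj[OF _ injh] fA fB by simp
qed

lemma max_subadd:
  assumes fA: "finite A" and fB: "finite B" and s: "sep A B"
  shows "max_vis (A \<union> B) \<le> max_vis A + max_vis B"
proof -
  obtain f where f: "stacking_order (A \<union> B) f" "vis (A \<union> B) f = max_vis (A \<union> B)"
    using max_attained fA fB by (metis finite_UnI)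
  have inj: "inj_on f (A \<union> B)" using f(1) unfolding stacking_order_def bij_betw_def by auto
  have "vis (A \<union> B) f = vis A f + vis B f" using vis_union_sep[OF fA fB s] .
  also have "\<dots> \<le> max_vis A + max_vis B"
    using vis_le_max_inj[OF fA] vis_le_max_inj[OF fB] inj inj_on_subset
    by (metis Un_upper1 Un_upper2 add_mono)
  finally show ?thesis using f by simp
qed

lemma max_transl:
  assumes fin: "finite C"
  shows "max_vis ((+) a ` C) \<le> max_vis C"
proof -
  obtain f where f: "stacking_order ((+) a ` C) f" "vis ((+) a ` C) f = max_vis ((+) a ` C)"
    using max_attained fin by blast
  define g where "g z = f (a + z)" for z
  have inj: "inj_on g C" using f(1) unfolding stacking_order_def bij_betw_def inj_on_def g_def by auto
  have va: "visible_angles ((+) a ` C) f (a + z) = visible_angles C g z" for z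
  proof -
    have "a + z + cis t \<in> cball (a + w) 1 \<longleftrightarrow> z + cis t \<in> cball w 1" for t w
      by (simp add: dist_norm algebra_simps)
    then show ?thesis unfolding visible_angles_def g_def by auto
  qed
  have "vis ((+) a ` C) f = vis C g" unfolding vis_def
    by (subst sum.reindex) (auto simp: va)
  then show ?thesis using f vis_le_max_inj[OF fin inj] by simp
qed

lemma depth_union:
  assumes "depth_le A c" "depth_le B c" "sep A B"
  shows "depth_le (A \<union> B) c"
  unfolding depth_le_def
proof
  fix p
  show "card {z \<in> A \<union> B. p \<in> cball z 1} \<le> c"
  proof (cases "\<exists>z\<in>A. p \<in> cball z 1")
    case True
    then obtain z where z: "z \<in> A" "p \<in> cball z 1" by auto
    have "{z \<in> A \<union> B. p \<in> cball z 1} = {z \<in> A. p \<in> cball z 1}"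
    proof -
      have "w \<in> A" if "w \<in> B" "p \<in> cball w 1" for w
      proof -
      from that have "dist z w \<le> 2" using z dist_triangle[of z w p] by (auto simp: dist_commute)
      then show "w \<in> A" using assms(3) z \<open>w \<in> B\<close> unfolding sep_def by force
      qed
      then show ?thesis by auto
    qed
    then show ?thesis using assms(1) unfolding depth_le_def by metis
  next
    case False
    then have "{z \<in> A \<union> B. p \<in> cball z 1} = {z \<in> B. p \<in> cball z 1}" by auto
    then show ?thesis using assms(2) unfolding depth_le_def by metis
  qed
qed



lemma depth_transl:
  assumes "depth_le C0 d" shows "depth_le ((+) a ` C0) d"
  unfolding depth_le_def
proof
  fix p
  have "{z \<in> (+) a ` C0. p \<in> cball z 1} = (+) a ` {z\<in>C0. p - a \<in> cball z 1}"
    by (auto simp: dist_norm algebra_simps image_iff)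
  then have "card {z \<in> (+) a ` C0. p \<in> cball z 1} \<le> card {z\<in>C0. p - a \<in> cball z 1}"
    by (simp add: card_image inj_on_def)
  also have "\<dots> \<le> d" using assms unfolding depth_le_def by blast
  finally show "card {z \<in> (+) a ` C0. p \<in> cball z 1} \<le> d" .
qed

lemma copies:
  assumes fin: "finite C0" and ck: "card C0 = k"
  shows "\<exists>U. finite U \<and> card U = n * k \<and> max_vis U \<le> real n * max_vis C0
             \<and> (depth_le C0 d \<longrightarrow> depth_le U d)"
proof -
  define M where "M = (\<Sum>z\<in>C0. norm z)"
  have nM: "norm z \<le> M" if "z \<in> C0" for z unfolding M_def using fin that
    by (intro member_le_sum) auto
  have M0: "M \<ge> 0" unfolding M_def by (simp add: sum_nonneg)
  define R where "R = 2 * M + 3"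
  define cp where "cp j = (+) (of_real (R * real j)) ` C0" for j :: nat
  define U where "U n = (\<Union>j<n. cp j)" for n
  have sepU: "sep (U n) (cp n)" for n
    unfolding sep_def U_def
  proof (intro ballI)
    fix a b assume a: "a \<in> (\<Union>j<n. cp j)" and b: "b \<in> cp n"
    then obtain i x y where i: "i < n" "x \<in> C0" "y \<in> C0" "a = of_real (R * real i) + x"
      "b = of_real (R * real n) + y" unfolding cp_def by auto
    have "a - b = of_real (R * (real i - real n)) + (x - y)" using i by (simp add: algebra_simps)
    then have "norm (a - b) \<ge> norm (of_real (R * (real i - real n)) :: complex) - norm (x - y)"
      using norm_diff_ineq[of "of_real (R * (real i - real n)) :: complex" "x - y"] by simp
    moreover have "norm (of_real (R * (real i - real n)) :: complex) = R * (real n - real i)"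
    proof -
      have "R \<ge> 0" unfolding R_def using M0 by linarith
      moreover have "real i - real n < 0" using i by simp
      moreover have "norm (of_real (R * (real i - real n)) :: complex) = \<bar>R * (real i - real n)\<bar>"
        by (rule norm_of_real)
      ultimately show ?thesis by (simp add: abs_mult)
    qed
    moreover have "R * (real n - real i) \<ge> R"
    proof -
      have "real n - real i \<ge> 1" using i by linarith
      moreover have "R \<ge> 0" unfolding R_def using M0 by linarith
      ultimately show ?thesis by (metis mult_left_mono mult.right_neutral)
    qed
    moreover have "norm (x - y) \<le> 2 * M" using nM[of x] nM[of y] i norm_triangle_ineq4[of x y] by linarith
    ultimately show "2 < dist a b" unfolding R_def dist_norm by linarith
  qed
  have ccp: "finite (cp j) \<and> card (cp j) = k \<and> max_vis (cp j) \<le> max_vis C0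
             \<and> (depth_le C0 d \<longrightarrow> depth_le (cp j) d)" for j
    unfolding cp_def using fin ck max_transl depth_transl
    by (simp add: card_image)
  have "finite (U n) \<and> card (U n) = n * k \<and> max_vis (U n) \<le> real n * max_vis C0
             \<and> (depth_le C0 d \<longrightarrow> depth_le (U n) d)"
  proof (induction n)
    case 0
    have "max_vis {} = 0" using max_attained[of "{}"] unfolding vis_def by auto
    moreover have "depth_le {} d" unfolding depth_le_def by simp
    ultimately show ?case unfolding U_def by simp
  next
    case (Suc n)
    have eq: "U (Suc n) = U n \<union> cp n" unfolding U_def by (simp add: lessThan_Suc Un_commute)
    have d: "U n \<inter> cp n = {}" by (rule sep_disj[OF sepU])
    have fU: "finite (U n)" using Suc.IH by blast
    have fc: "finite (cp n)" using ccp[of n] by blast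
    have "max_vis (U (Suc n)) \<le> max_vis (U n) + max_vis (cp n)"
      unfolding eq by (rule max_subadd[OF fU fc sepU])
    also have "\<dots> \<le> real n * max_vis C0 + max_vis C0"
      using Suc.IH ccp[of n] by linarith
    finally have m: "max_vis (U (Suc n)) \<le> real (Suc n) * max_vis C0" by (simp add: algebra_simps)
    have cd: "card (U (Suc n)) = Suc n * k"
      unfolding eq using card_Un_disjoint[OF fU fc d] Suc.IH ccp[of n] by simp
    have dd: "depth_le C0 d \<longrightarrow> depth_le (U (Suc n)) d"
      unfolding eq using Suc.IH ccp[of n] depth_union[OF _ _ sepU] by blast
    show ?case using fU fc eq m cd dd by simp
  qed
  then show ?thesis by blast
qed

lemma v_sub:
  assumes "1 \<le> k" "k \<le> c"
  shows "v c \<le> (2 * real c / real k) * v k"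
proof -
  define N where "N = c div k + 1"
  have Nk: "c \<le> N * k"
  proof -
    obtain q r where qr: "q = c div k" "r = c mod k" by blast
    have h1: "c = q * k + r" using qr by simp
    have h2: "r < k" using assms qr by simp
    have h3: "N * k = q * k + k" using qr unfolding N_def by simp
    have g: "\<And>a b r k. (a::nat) = b + r \<Longrightarrow> r < k \<Longrightarrow> a \<le> b + k" by linarith
    show ?thesis unfolding h3 by (rule g[OF h1 h2])
  qed
  have key: "v c \<le> real N * (v k + e)" if e0: "0 < e" for e
  proof -
    from v_approx[OF e0, of k] obtain C0 where C0: "finite C0" "card C0 = k" "max_vis C0 < v k + e"
      by (elim exE conjE)
    from copies[OF C0(1,2), of N 0] obtain U where
      U: "finite U" "card U = N * k" "max_vis U \<le> real N * max_vis C0"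
      by (elim exE conjE)
    have cU: "c \<le> card U" using Nk unfolding U(2) .
    obtain S where S: "S \<subseteq> U" "card S = c" "finite S" by (rule obtain_subset_with_card_n[OF cU])
    have s1: "v c \<le> max_vis S" by (rule v_le[OF S(3) S(2)])
    have s2: "max_vis S \<le> max_vis U" by (rule max_sub[OF U(1) S(1)])
    have s3: "real N * max_vis C0 \<le> real N * (v k + e)"
      by (rule mult_left_mono) (use C0(3) in linarith, simp)
    show ?thesis using s1 s2 s3 U(3) by linarith
  qed
  have vN: "v c \<le> real N * v k"
  proof (rule field_le_epsilon)
    fix e :: real assume e: "0 < e"
    have "real N > 0" unfolding N_def by simp
    then have "v c \<le> real N * (v k + e / real N)" using key[of "e / real N"] e by simp
    also have "\<dots> = real N * v k + e" using \<open>real N > 0\<close> by (simp add: algebra_simps)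
    finally show "v c \<le> real N * v k + e" .
  qed
  have N2: "real N \<le> 2 * real c / real k"
  proof -
    have "real (c div k) \<le> real c / real k" by (rule of_nat_div_le_of_nat)
    moreover have "1 \<le> real c / real k" using assms by simp
    ultimately show ?thesis unfolding N_def by simp
  qed
  have "real N * v k \<le> (2 * real c / real k) * v k"
  proof -
    have "0 \<le> v k" using v_ge[OF assms(1)] pi_gt_zero by linarith
    then show ?thesis using N2 by (rule mult_right_mono[rotated])
  qed
  then show ?thesis using vN by linarith
qed



lemma v_sub':
  assumes "1 \<le> k" "k \<le> c"
  shows "v c * real k / (2 * real c) \<le> v k"
proof -
  have "v c \<le> (2 * real c / real k) * v k" by (rule v_sub[OF assms])
  then have "v c * real k \<le> 2 * real c * v k" using assms by (simp add: field_simps)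
  then show ?thesis using assms by (simp add: field_simps)
qed

lemma part2:
  "\<exists>K>0. \<forall>c m::nat. 0 < c \<longrightarrow> 0 < m \<longrightarrow>
            (\<exists>C. finite C \<and> card C = m * c \<and> depth_le C c \<and>
               (\<forall>f. stacking_order C f \<longrightarrow> vis C f \<le> K * v c * real (m * c) / real c))"
proof (intro exI[of _ 2] conjI allI impI)
  fix c m :: nat assume c: "0 < c" and m: "0 < m"
  have vpos: "v c > 0" using v_ge[of c] c pi_gt_zero by linarith
  obtain C0 where C0: "finite C0" "card C0 = c" "max_vis C0 < v c + v c" using v_approx vpos by blast
  have dC0: "depth_le C0 c" unfolding depth_le_def
    using C0 by (metis (no_types, lifting) card_mono mem_Collect_eq subsetI)
  obtain U where U: "finite U" "card U = m * c" "max_vis U \<le> real m * max_vis C0" "depth_le U c"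
    using copies[OF C0(1,2), of m c] dC0 by blast
  show "\<exists>C. finite C \<and> card C = m * c \<and> depth_le C c \<and>
               (\<forall>f. stacking_order C f \<longrightarrow> vis C f \<le> 2 * v c * real (m * c) / real c)"
  proof (intro exI[of _ U] conjI allI impI)
    fix f assume "stacking_order U f"
    then have "vis U f \<le> max_vis U" using vis_le_max U by blast
    also have "\<dots> \<le> real m * (2 * v c)"
    proof -
      have "real m * max_vis C0 \<le> real m * (2 * v c)" using C0(3) by (intro mult_left_mono) auto
      then show ?thesis using U(3) by linarith
    qed
    also have "\<dots> = 2 * v c * real (m * c) / real c" using c by simp
    finally show "vis U f \<le> 2 * v c * real (m * c) / real c" .
  qed (use U in auto)
qed simp

definition cellx :: "complex \<Rightarrow> int" where "cellx z = \<lfloor>Re z / (6/5)\<rfloor>"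
definition celly :: "complex \<Rightarrow> int" where "celly z = \<lfloor>Im z / (6/5)\<rfloor>"
definition cell :: "complex \<Rightarrow> int \<times> int" where "cell z = (cellx z, celly z)"
definition cls :: "complex \<Rightarrow> int \<times> int" where "cls z = (cellx z mod 3, celly z mod 3)"

lemma aux56: "2 < (x::real) * (5/6) \<Longrightarrow> 2 < x" by linarith

lemma floor_sep:
  assumes "\<lfloor>x\<rfloor> mod 3 = \<lfloor>y\<rfloor> mod 3" "\<lfloor>x\<rfloor> \<noteq> \<lfloor>y::real\<rfloor>"
  shows "2 < \<bar>x - y\<bar>"
proof -
  have "(3::int) dvd \<lfloor>x\<rfloor> - \<lfloor>y\<rfloor>" using assms(1) by (simp add: mod_eq_dvd_iff)
  then obtain q where q: "\<lfloor>x\<rfloor> - \<lfloor>y\<rfloor> = 3 * q" by (auto simp: dvd_def)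
  have "q \<noteq> 0" using q assms(2) by auto
  then have "q \<ge> 1 \<or> q \<le> -1" by linarith
  then have "\<lfloor>x\<rfloor> \<ge> \<lfloor>y\<rfloor> + 3 \<or> \<lfloor>y\<rfloor> \<ge> \<lfloor>x\<rfloor> + 3" using q by linarith
  then show ?thesis
  proof
    assume "\<lfloor>x\<rfloor> \<ge> \<lfloor>y\<rfloor> + 3"
    then have "real_of_int \<lfloor>x\<rfloor> \<ge> real_of_int \<lfloor>y\<rfloor> + 3" by linarith
    then show ?thesis using of_int_floor_le[of x] real_of_int_floor_add_one_gt[of y] by linarith
  next
    assume "\<lfloor>y\<rfloor> \<ge> \<lfloor>x\<rfloor> + 3"
    then have "real_of_int \<lfloor>y\<rfloor> \<ge> real_of_int \<lfloor>x\<rfloor> + 3" by linarith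
    then show ?thesis using of_int_floor_le[of y] real_of_int_floor_add_one_gt[of x] by linarith
  qed
qed

lemma cell_sep:
  assumes "cls z = cls w" "cell z \<noteq> cell w"
  shows "2 < dist z w"
proof -
  have "2 < \<bar>Re z - Re w\<bar> \<or> 2 < \<bar>Im z - Im w\<bar>"
  proof (cases "cellx z = cellx w")
    case False
    have m: "cellx z mod 3 = cellx w mod 3" using assms(1) by (simp add: cls_def)
    have "2 < \<bar>Re z / (6/5) - Re w / (6/5)\<bar>"
      using floor_sep[of "Re z / (6/5)" "Re w / (6/5)"] m False unfolding cellx_def by blast
    moreover have e: "Re z / (6/5) - Re w / (6/5) = (Re z - Re w) * (5/6)" by (simp add: field_simps)
    ultimately have F: "2 < \<bar>(Re z - Re w) * (5/6)\<bar>" by (simp only: e)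
    have E: "\<bar>(Re z - Re w) * (5/6)\<bar> = \<bar>Re z - Re w\<bar> * (5/6)"
      using abs_mult[of "Re z - Re w" "5/6::real"] by simp
    from F have "2 < \<bar>Re z - Re w\<bar> * (5/6)" unfolding E .
    then have "2 < \<bar>Re z - Re w\<bar>" by (rule aux56)
    then show ?thesis by blast
  next
    case True
    then have ne: "celly z \<noteq> celly w" using assms(2) unfolding cell_def by auto
    have m: "celly z mod 3 = celly w mod 3" using assms(1) by (simp add: cls_def)
    have "2 < \<bar>Im z / (6/5) - Im w / (6/5)\<bar>"
      using floor_sep[of "Im z / (6/5)" "Im w / (6/5)"] m ne unfolding celly_def by blast
    moreover have e: "Im z / (6/5) - Im w / (6/5) = (Im z - Im w) * (5/6)" by (simp add: field_simps)
    ultimately have F: "2 < \<bar>(Im z - Im w) * (5/6)\<bar>" by (simp only: e)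
    have E: "\<bar>(Im z - Im w) * (5/6)\<bar> = \<bar>Im z - Im w\<bar> * (5/6)"
      using abs_mult[of "Im z - Im w" "5/6::real"] by simp
    from F have "2 < \<bar>Im z - Im w\<bar> * (5/6)" unfolding E .
    then have "2 < \<bar>Im z - Im w\<bar>" by (rule aux56)
    then show ?thesis by blast
  qed
  moreover have "\<bar>Re z - Re w\<bar> \<le> dist z w" "\<bar>Im z - Im w\<bar> \<le> dist z w"
    using abs_Re_le_cmod[of "z - w"] abs_Im_le_cmod[of "z - w"] by (auto simp: dist_norm)
  ultimately show ?thesis by linarith
qed

definition cc :: "int \<times> int \<Rightarrow> complex" where
  "cc k = Complex (6/5 * (real_of_int (fst k) + 1/2)) (6/5 * (real_of_int (snd k) + 1/2))"

lemma sq_bound: "-(3/5) \<le> (d::real) \<Longrightarrow> d \<le> 3/5 \<Longrightarrow> d^2 \<le> 9/25"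
proof -
  assume "-(3/5) \<le> d" "d \<le> 3/5"
  then have "0 \<le> (3/5 - d) * (3/5 + d)" by (intro mult_nonneg_nonneg) auto
  then show ?thesis by (simp add: power2_eq_square algebra_simps)
qed

lemma cell_cover: "cc (cell z) \<in> cball z 1"
proof -
  define dx where "dx = Re z - Re (cc (cell z))"
  define dy where "dy = Im z - Im (cc (cell z))"
  have fx: "real_of_int (cellx z) \<le> Re z / (6/5)" "Re z / (6/5) < real_of_int (cellx z) + 1"
    unfolding cellx_def by linarith+
  have fy: "real_of_int (celly z) \<le> Im z / (6/5)" "Im z / (6/5) < real_of_int (celly z) + 1"
    unfolding celly_def by linarith+
  have "-(3/5) \<le> dx" "dx \<le> 3/5" using fx unfolding dx_def cc_def cell_def by (auto simp: field_simps)
  then have x: "dx^2 \<le> 9/25" by (rule sq_bound)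
  have "-(3/5) \<le> dy" "dy \<le> 3/5" using fy unfolding dy_def cc_def cell_def by (auto simp: field_simps)
  then have y: "dy^2 \<le> 9/25" by (rule sq_bound)
  have "dist z (cc (cell z)) = sqrt (dx^2 + dy^2)"
    unfolding dist_norm cmod_def dx_def dy_def by simp
  also have "\<dots> \<le> 1" using x y by simp
  finally show ?thesis by simp
qed



lemma part1:
  "\<exists>\<kappa>>0. \<forall>c n::nat. 0 < c \<longrightarrow> 0 < n \<longrightarrow>
            (\<forall>C. finite C \<and> card C = n \<and> depth_le C c \<longrightarrow>
               (\<exists>f. stacking_order C f \<and> vis C f \<ge> \<kappa> * v c * real n / real c))"
proof (intro exI[of _ "1/18"] conjI allI impI)
  fix c n :: nat and C :: "complex set"
  assume c: "0 < c" and n: "0 < n" and H: "finite C \<and> card C = n \<and> depth_le C c"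
  have fin: "finite C" and cn: "card C = n" and dep: "depth_le C c" using H by auto
  define Q where "Q = {0..2::int} \<times> {0..2::int}"
  have fQ: "finite Q" and cQ: "card Q = 9" and nQ: "Q \<noteq> {}" unfolding Q_def by auto
  have clsQ: "cls z \<in> Q" for z unfolding Q_def cls_def by auto
  have "\<exists>q\<in>Q. n \<le> 9 * card {z\<in>C. cls z = q}"
  proof (rule ccontr)
    assume "\<not> ?thesis"
    then have lt: "\<And>q. q \<in> Q \<Longrightarrow> 9 * card {z\<in>C. cls z = q} < n" by auto
    have "C = (\<Union>q\<in>Q. {z\<in>C. cls z = q})" using clsQ by auto
    then have "n \<le> (\<Sum>q\<in>Q. card {z\<in>C. cls z = q})" using cn card_UN_le[OF fQ, of "\<lambda>q. {z\<in>C. cls z = q}"]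
      by simp
    then have "9 * n \<le> (\<Sum>q\<in>Q. 9 * card {z\<in>C. cls z = q})" by (simp add: sum_distrib_left[symmetric])
    also have "\<dots> < (\<Sum>q\<in>Q. n)" using lt fQ nQ by (intro sum_strict_mono) auto
    also have "\<dots> = 9 * n" using cQ by simp
    finally show False by simp
  qed
  then obtain q where q: "n \<le> 9 * card {z\<in>C. cls z = q}" by blast
  define S where "S = {z\<in>C. cls z = q}"
  have fS: "finite S" and SC: "S \<subseteq> C" unfolding S_def using fin by auto
  define Sk where "Sk k = {z\<in>S. cell z = k}" for k
  define Kc where "Kc = cell ` S"
  have fK: "finite Kc" unfolding Kc_def using fS by simp
  have fSk: "finite (Sk k)" for k unfolding Sk_def using fS by simp
  have sup: "F \<subseteq> Kc \<longrightarrow> (\<Sum>k\<in>F. max_vis (Sk k)) \<le> max_vis (\<Union>k\<in>F. Sk k)" if "finite F" for F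
    using that
  proof (induction F rule: finite_induct)
    case empty
    then show ?case using max_nonneg[of "{}"] by simp
  next
    case (insert k F)
    show ?case
    proof
      assume sub: "insert k F \<subseteq> Kc"
      have sp: "sep (Sk k) (\<Union>k\<in>F. Sk k)" unfolding sep_def
      proof (intro ballI)
        fix a b assume a: "a \<in> Sk k" and b: "b \<in> (\<Union>k\<in>F. Sk k)"
        then obtain k' where "k' \<in> F" "b \<in> Sk k'" by auto
        then have "cell b \<noteq> cell a" "cls a = cls b" using a insert(2) unfolding Sk_def S_def by auto
        then show "2 < dist a b" using cell_sep by metis
      qed
      have fU: "finite (\<Union>k\<in>F. Sk k)" using insert(1) fSk by simp
      have "(\<Sum>k\<in>insert k F. max_vis (Sk k)) = max_vis (Sk k) + (\<Sum>k\<in>F. max_vis (Sk k))"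
        using insert by simp
      also have "\<dots> \<le> max_vis (Sk k) + max_vis (\<Union>k\<in>F. Sk k)" using insert sub by simp
      also have "\<dots> \<le> max_vis (Sk k \<union> (\<Union>k\<in>F. Sk k))" using max_sup[OF fSk fU sp] .
      finally show "(\<Sum>k\<in>insert k F. max_vis (Sk k)) \<le> max_vis (\<Union>k\<in>insert k F. Sk k)" by simp
    qed
  qed
  have SU: "S = (\<Union>k\<in>Kc. Sk k)" unfolding Kc_def Sk_def by auto
  have bound: "v c * real (card (Sk k)) / (2 * real c) \<le> max_vis (Sk k)" if k: "k \<in> Kc" for k
  proof -
    have "Sk k \<noteq> {}" using k unfolding Kc_def Sk_def by auto
    then have k1: "1 \<le> card (Sk k)" using fSk by (simp add: Suc_le_eq card_gt_0_iff)
    have "Sk k \<subseteq> {z\<in>C. cc k \<in> cball z 1}" unfolding Sk_def S_def using cell_cover by auto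
    then have "card (Sk k) \<le> card {z\<in>C. cc k \<in> cball z 1}" using fin by (intro card_mono) auto
    also have "\<dots> \<le> c" using dep unfolding depth_le_def by blast
    finally have "card (Sk k) \<le> c" .
    then have "v c * real (card (Sk k)) / (2 * real c) \<le> v (card (Sk k))" using v_sub' k1 by blast
    also have "\<dots> \<le> max_vis (Sk k)" using v_le fSk by blast
    finally show ?thesis .
  qed
  have disj: "pairwise (\<lambda>k k'. disjnt (Sk k) (Sk k')) Kc"
    unfolding pairwise_def disjnt_def Sk_def by auto
  have "card S = (\<Sum>k\<in>Kc. card (Sk k))"
    unfolding SU using fK fSk disj unfolding pairwise_def disjnt_def by (intro card_UN_disjoint) auto
  then have "v c * real (card S) / (2 * real c) = (\<Sum>k\<in>Kc. v c * real (card (Sk k)) / (2 * real c))"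
    by (simp add: sum_distrib_left sum_divide_distrib)
  also have "\<dots> \<le> (\<Sum>k\<in>Kc. max_vis (Sk k))" using bound by (intro sum_mono) auto
  also have "\<dots> \<le> max_vis S" using sup[OF fK] SU by simp
  also have "\<dots> \<le> max_vis C" using max_sub fin SC by blast
  finally have m1: "v c * real (card S) / (2 * real c) \<le> max_vis C" .
  have vc0: "0 \<le> v c" using v_ge[of c] c pi_gt_zero by linarith
  have "real n \<le> 9 * real (card S)" using q S_def by (metis of_nat_le_iff of_nat_mult of_nat_numeral)
  then have "v c * real n \<le> v c * (9 * real (card S))" using vc0 by (intro mult_left_mono)
  then have "1/18 * v c * real n / real c \<le> v c * real (card S) / (2 * real c)"
    using c by (simp add: field_simps)
  also have "\<dots> \<le> max_vis C" by (rule m1)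
  finally have m2: "1/18 * v c * real n / real c \<le> max_vis C" .
  obtain f where "stacking_order C f" "vis C f = max_vis C" using max_attained fin by blast
  then show "\<exists>f. stacking_order C f \<and> 1/18 * v c * real n / real c \<le> vis C f" using m2 by auto
qed simp


theorem theorem6:
  shows "(\<exists>\<kappa>>0. \<forall>c n::nat. 0 < c \<longrightarrow> 0 < n \<longrightarrow>
            (\<forall>C. finite C \<and> card C = n \<and> depth_le C c \<longrightarrow>
               (\<exists>f. stacking_order C f \<and> vis C f \<ge> \<kappa> * v c * real n / real c)))
       \<and> (\<exists>K>0. \<forall>c m::nat. 0 < c \<longrightarrow> 0 < m \<longrightarrow>
            (\<exists>C. finite C \<and> card C = m * c \<and> depth_le C c \<and>
               (\<forall>f. stacking_order C f \<longrightarrow> vis C f \<le> K * v c * real (m * c) / real c)))"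
  by (rule conjI[OF part1 part2])

end
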